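(* Let $\Gamma$ be a finite connected trivalent ribbon graph with set of oriented edges $E$, let $z:E\to\mathbb{R}$ satisfy $z(\rho_1\gamma)=z(\gamma)$ for all $\gamma\in E$, and fix $\epsilon\in E$. Then the image $\Delta(\Gamma,z,\epsilon):=CHF(B(E,\epsilon))\subset PSL_2(\mathbb{R})$ is a Fuchsian group (a discrete subgroup of $PSL_2(\mathbb{R})$).
   Context: A trivalent ribbon graph is a graph all of whose vertices have valency $3$, together with a cyclic order on the edge-ends at each vertex. $E$ denotes the set of oriented edges of $\Gamma$. The group $C_2^+[3]=\langle \rho_0,\rho_1 \mid \rho_1^2=\rho_0^3=1\rangle$ acts on $E$: $\rho_0$ sends an oriented edge to the next oriented edge (in the cyclic order, counterclockwise) with the same origin, and $\rho_1$ reverses the orientation of the edge. For $\epsilon\in E$, $B(E,\epsilon)=\{w\in C_2^+[3] : w\epsilon=\epsilon\}$ is its stabilizer. For $a\in\mathbb{R}$ put $X_a=\begin{pmatrix}0&-e^{a/2}\\ e^{-a/2}&0\end{pmatrix}$ and $L=\begin{pmatrix}0&1\\-1&-1\end{pmatrix}$, regarded in $PSL_2(\mathbb{R})$. The map $CHF: C_2^+[3]\to PSL_2(\mathbb{R})$ (depending on $\Gamma,z,\epsilon$) is defined inductively on words by $CHF(1)=1$, $CHF(\rho_0 w)=L\cdot CHF(w)$, $CHF(\rho_1 w)=X_{z(w\epsilon)}\cdot CHF(w)$; it is well defined on the group since $L^3=1$ and $X_aX_a=1$ in $PSL_2(\mathbb{R})$. Its restriction to $B(E,\epsilon)$ is a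 homomorphism, so $\Delta(\Gamma,z,\epsilon)$ is a subgroup of $PSL_2(\mathbb{R})$. *)

theory Defs
  imports "HOL-Analysis.Analysis"
begin

text \<open>Elements of PSL_2(R) are represented by matrices in SL_2(R) (type real^2^2),
  two matrices A, B representing the same element iff B = A or B = -A.\<close>

definition mat2 :: "real \<Rightarrow> real \<Rightarrow> real \<Rightarrow> real \<Rightarrow> real^2^2" where
  "mat2 a b c d = vector [vector [a, b], vector [c, d]]"

definition Xmat :: "real \<Rightarrow> real^2^2" where
  "Xmat a = mat2 0 (- exp (a/2)) (exp (- a/2)) 0"

definition Lmat :: "real^2^2" where
  "Lmat = mat2 0 1 (-1) (-1)"

definition psl_eq :: "real^2^2 \<Rightarrow> real^2^2 \<Rightarrow> bool" where
  "psl_eq A B \<longleftrightarrow> B = A \<or> B = - A"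

text \<open>Metric on PSL_2(R) induced from SL_2(R) (inducing the quotient topology).\<close>
definition psl_dist :: "real^2^2 \<Rightarrow> real^2^2 \<Rightarrow> real" where
  "psl_dist A B = min (norm (A - B)) (norm (A + B))"

definition psl_subgroup :: "(real^2^2) set \<Rightarrow> bool" where
  "psl_subgroup S \<longleftrightarrow> (\<forall>A\<in>S. det A = 1) \<and> (\<exists>A\<in>S. psl_eq A (mat 1))
     \<and> (\<forall>A\<in>S. \<forall>B\<in>S. \<exists>C\<in>S. psl_eq C (A ** B))
     \<and> (\<forall>A\<in>S. \<exists>C\<in>S. psl_eq C (matrix_inv A))"

definition psl_discrete :: "(real^2^2) set \<Rightarrow> bool" where
  "psl_discrete S \<longleftrightarrow> (\<forall>A\<in>S. \<exists>e>0. \<forall>B\<in>S. psl_dist A B < e \<longrightarrow> psl_eq A B)"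

definition fuchsian :: "(real^2^2) set \<Rightarrow> bool" where
  "fuchsian S \<longleftrightarrow> psl_subgroup S \<and> psl_discrete S"

text \<open>Words in the generators of C_2^+[3]: True = rho_1, False = rho_0.
  Every element of the group is represented by such a (positive) word, since both
  generators have finite order.  The word a # w means (generator a) * w.\<close>
fun act :: "('e \<Rightarrow> 'e) \<Rightarrow> ('e \<Rightarrow> 'e) \<Rightarrow> bool list \<Rightarrow> 'e \<Rightarrow> 'e" where
  "act r0 r1 [] e = e"
| "act r0 r1 (a # w) e = (if a then r1 else r0) (act r0 r1 w e)"

fun CHF :: "('e \<Rightarrow> 'e) \<Rightarrow> ('e \<Rightarrow> 'e) \<Rightarrow> ('e \<Rightarrow> real) \<Rightarrow> 'e \<Rightarrow> bool list \<Rightarrow> real^2^2" where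
  "CHF r0 r1 z \<epsilon> [] = mat 1"
| "CHF r0 r1 z \<epsilon> (a # w) =
     (if a then Xmat (z (act r0 r1 w \<epsilon>)) else Lmat) ** CHF r0 r1 z \<epsilon> w"

text \<open>Delta(Gamma,z,eps) = CHF(B(E,eps)), B(E,eps) the stabilizer of eps.\<close>
definition Delta :: "('e \<Rightarrow> 'e) \<Rightarrow> ('e \<Rightarrow> 'e) \<Rightarrow> ('e \<Rightarrow> real) \<Rightarrow> 'e \<Rightarrow> (real^2^2) set" where
  "Delta r0 r1 z \<epsilon> = {A. \<exists>w. act r0 r1 w \<epsilon> = \<epsilon> \<and> psl_eq (CHF r0 r1 z \<epsilon> w) A}"

text \<open>A finite connected trivalent ribbon graph, given by its set E of oriented edges,
  rho_0 (rotation at the origin vertex, orbits of size 3) and rho_1 (orientation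
  reversal, a fixed-point-free involution); connected = transitive action.\<close>
definition trivalent_ribbon_graph :: "'e set \<Rightarrow> ('e \<Rightarrow> 'e) \<Rightarrow> ('e \<Rightarrow> 'e) \<Rightarrow> bool" where
  "trivalent_ribbon_graph E r0 r1 \<longleftrightarrow> finite E \<and> E \<noteq> {} \<and>
     r0 permutes E \<and> r1 permutes E \<and>
     (\<forall>e\<in>E. r0 (r0 (r0 e)) = e \<and> r0 e \<noteq> e) \<and>
     (\<forall>e\<in>E. r1 (r1 e) = e \<and> r1 e \<noteq> e)"

definition connected_rg :: "'e set \<Rightarrow> ('e \<Rightarrow> 'e) \<Rightarrow> ('e \<Rightarrow> 'e) \<Rightarrow> bool" where
  "connected_rg E r0 r1 \<longleftrightarrow> (\<forall>e\<in>E. \<forall>e'\<in>E. \<exists>w. act r0 r1 w e = e')"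

end

theory Submission imports Defs begin

lemma mat2_nth [simp]:
  "mat2 a b c d $ 1 $ 1 = a" "mat2 a b c d $ 1 $ 2 = b"
  "mat2 a b c d $ 2 $ 1 = c" "mat2 a b c d $ 2 $ 2 = d"
  by (simp_all add: mat2_def)

lemma mat2_eta: "(A::real^2^2) = mat2 (A$1$1) (A$1$2) (A$2$1) (A$2$2)"
  by (simp add: vec_eq_iff forall_2)

lemma mat2_eq_iff: "mat2 a b c d = mat2 a' b' c' d' \<longleftrightarrow> a = a' \<and> b = b' \<and> c = c' \<and> d = d'"
  by (metis mat2_nth)

lemma mat2_mult: "mat2 a b c d ** mat2 a' b' c' d' =
   mat2 (a*a'+b*c') (a*b'+b*d') (c*a'+d*c') (c*b'+d*d')"
  by (simp add: vec_eq_iff forall_2 matrix_matrix_mult_def sum_2)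

lemma mat2_one: "mat 1 = mat2 1 0 0 1"
  by (simp add: vec_eq_iff forall_2 mat_def)

lemma mat2_neg: "- mat2 a b c d = mat2 (-a) (-b) (-c) (-d)"
  by (simp add: vec_eq_iff forall_2)

lemma mat2_minus: "mat2 a b c d - mat2 a' b' c' d' = mat2 (a-a') (b-b') (c-c') (d-d')"
  by (simp add: vec_eq_iff forall_2)

lemma mat2_plus: "mat2 a b c d + mat2 a' b' c' d' = mat2 (a+a') (b+b') (c+c') (d+d')"
  by (simp add: vec_eq_iff forall_2)

lemma mat2_det: "det (mat2 a b c d) = a*d - b*c"
  by (simp add: det_2)

lemma entry_le_norm: "\<bar>(A::real^2^2)$i$j\<bar> \<le> norm A"
  by (rule order_trans[OF component_le_norm_cart Finite_Cartesian_Product.norm_nth_le])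

lemma norm_le_entries: "norm (A::real^2^2) \<le> \<bar>A$1$1\<bar> + \<bar>A$1$2\<bar> + \<bar>A$2$1\<bar> + \<bar>A$2$2\<bar>"
proof -
  have a: "norm A \<le> (\<Sum>i\<in>UNIV. norm (A$i))"
    unfolding norm_vec_def by (rule L2_set_le_sum) auto
  have b: "(\<Sum>i\<in>UNIV. norm (A$i)) = norm (A$1) + norm (A$2)" by (rule sum_2)
  have c: "norm (A$1) \<le> \<bar>A$1$1\<bar> + \<bar>A$1$2\<bar>"
    using norm_le_l1_cart[of "A$1"] by (simp only: sum_2)
  have d: "norm (A$2) \<le> \<bar>A$2$1\<bar> + \<bar>A$2$2\<bar>"
    using norm_le_l1_cart[of "A$2"] by (simp only: sum_2)
  show ?thesis using a b c d by linarith
qed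
definition Kn :: "real^2^2 \<Rightarrow> real" where
  "Kn N = 2 * (\<bar>N$1$1\<bar> + \<bar>N$1$2\<bar> + \<bar>N$2$1\<bar> + \<bar>N$2$2\<bar>)"

lemma norm_mult_le: "norm ((N::real^2^2) ** (Y::real^2^2)) \<le> Kn N * norm Y"
proof -
  define n where "n = norm Y"
  have y: "\<bar>Y$i$j\<bar> \<le> n" for i j unfolding n_def by (rule entry_le_norm)
  have e: "\<bar>(N ** Y)$i$j\<bar> \<le> \<bar>N$i$1\<bar> * n + \<bar>N$i$2\<bar> * n" for i j
  proof -
    have "(N ** Y)$i$j = N$i$1 * Y$1$j + N$i$2 * Y$2$j"
      by (simp only: matrix_matrix_mult_def sum_2 vec_lambda_beta)
    also have "\<bar>\<dots>\<bar> \<le> \<bar>N$i$1\<bar> * \<bar>Y$1$j\<bar> + \<bar>N$i$2\<bar> * \<bar>Y$2$j\<bar>"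
      using abs_triangle_ineq[of "N$i$1 * Y$1$j" "N$i$2 * Y$2$j"] by (simp only: abs_mult)
    also have "\<dots> \<le> \<bar>N$i$1\<bar> * n + \<bar>N$i$2\<bar> * n"
      by (intro add_mono mult_left_mono y) auto
    finally show ?thesis .
  qed
  have "norm (N ** Y) \<le> \<bar>(N ** Y)$1$1\<bar> + \<bar>(N ** Y)$1$2\<bar> + \<bar>(N ** Y)$2$1\<bar> + \<bar>(N ** Y)$2$2\<bar>"
    by (rule norm_le_entries)
  moreover have "Kn N * n = (\<bar>N$1$1\<bar> * n + \<bar>N$1$2\<bar> * n) + (\<bar>N$1$1\<bar> * n + \<bar>N$1$2\<bar> * n)
     + (\<bar>N$2$1\<bar> * n + \<bar>N$2$2\<bar> * n) + (\<bar>N$2$1\<bar> * n + \<bar>N$2$2\<bar> * n)"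
    unfolding Kn_def by (simp add: algebra_simps)
  ultimately have "norm (N ** Y) \<le> Kn N * n"
    using e[of 1 1] e[of 1 2] e[of 2 1] e[of 2 2] by linarith
  then show ?thesis unfolding n_def .
qed

lemma psl_eq_refl[simp]: "psl_eq A A" by (simp add: psl_eq_def)
lemma psl_eq_sym: "psl_eq A B \<Longrightarrow> psl_eq B A" by (auto simp: psl_eq_def)
lemma psl_eq_trans: "psl_eq A B \<Longrightarrow> psl_eq B C \<Longrightarrow> psl_eq A C" by (auto simp: psl_eq_def)
lemma psl_eq_neg[simp]: "psl_eq A (- B) \<longleftrightarrow> psl_eq A B" "psl_eq (- A) B \<longleftrightarrow> psl_eq A B"
  by (auto simp: psl_eq_def)

lemma mult_neg_l: "(- (A::real^2^2)) ** (B::real^2^2) = - (A ** B)"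
  by (subst (1 2) mat2_eta[of A], subst (1 2) mat2_eta[of B]) (simp add: mat2_mult mat2_neg)
lemma mult_neg_r: "(A::real^2^2) ** (- (B::real^2^2)) = - (A ** B)"
  by (subst (1 2) mat2_eta[of A], subst (1 2) mat2_eta[of B]) (simp add: mat2_mult mat2_neg)
lemma mult_minus_r: "(A::real^2^2) ** ((B::real^2^2) - C) = A ** B - A ** C"
  by (subst (1 2 3) mat2_eta[of A], subst (1 2) mat2_eta[of B], subst (1 2) mat2_eta[of C])
     (simp add: mat2_mult mat2_minus algebra_simps)

lemma psl_eq_mult: "psl_eq A A' \<Longrightarrow> psl_eq B B' \<Longrightarrow> psl_eq ((A::real^2^2) ** (B::real^2^2)) (A' ** B')"
  by (auto simp: psl_eq_def mult_neg_l mult_neg_r)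

lemma psl_dist_neg: "psl_dist (- A) B = psl_dist A B" "psl_dist A (- B) = psl_dist A B"
proof -
  have 1: "norm (- A - B) = norm (A + B)" by (metis minus_diff_eq norm_minus_cancel diff_minus_eq_add add.commute minus_add_distrib)
  have 2: "norm (- A + B) = norm (A - B)" by (metis norm_minus_commute add.commute diff_conv_add_uminus)
  have 3: "norm (A - - B) = norm (A + B)" by simp
  have 4: "norm (A + - B) = norm (A - B)" by simp
  show "psl_dist (- A) B = psl_dist A B" "psl_dist A (- B) = psl_dist A B"
    unfolding psl_dist_def using 1 2 3 4 by (simp_all add: min.commute)
qed

lemma psl_dist_eq: "psl_eq A A' \<Longrightarrow> psl_eq B B' \<Longrightarrow> psl_dist A B = psl_dist A' B'"
  by (auto simp: psl_eq_def psl_dist_neg)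

lemma act_append: "act r0 r1 (u @ x) e = act r0 r1 u (act r0 r1 x e)"
  by (induction u) auto

lemma CHF_append: "CHF r0 r1 z e (u @ x) = CHF r0 r1 z (act r0 r1 x e) u ** CHF r0 r1 z e x"
  by (induction u) (auto simp: act_append matrix_mul_assoc)

lemma Xmat_sq: "Xmat a ** Xmat a = - mat 1"
  by (simp add: Xmat_def mat2_mult mat2_one mat2_neg flip: exp_add)

lemma Lmat_cube: "Lmat ** Lmat ** Lmat = mat 1"
  by (simp add: Lmat_def mat2_mult mat2_one)

lemma det_Xmat: "det (Xmat a) = 1" by (simp add: Xmat_def mat2_det flip: exp_add)
lemma det_Lmat: "det Lmat = 1" by (simp add: Lmat_def mat2_det)
lemma det_neg2: "det (- (A::real^2^2)) = det A" by (simp add: det_2)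

lemma det_CHF: "det (CHF r0 r1 z e w) = 1"
  by (induction w) (auto simp: det_mul det_Xmat det_Lmat)

fun red :: "bool list \<Rightarrow> bool" where
  "red (True # True # w) = False"
| "red (False # False # False # w) = False"
| "red [] = True"
| "red (a # w) = red w"

lemma cons_shift: "\<exists>u x. w = u @ g1 @ x \<or> w = u @ g2 @ x \<Longrightarrow>
   \<exists>u x. a # w = u @ g1 @ x \<or> a # w = u @ g2 @ x"
proof -
  assume "\<exists>u x. w = u @ g1 @ x \<or> w = u @ g2 @ x"
  then obtain u x where "w = u @ g1 @ x \<or> w = u @ g2 @ x" by blast
  then have "a # w = (a # u) @ g1 @ x \<or> a # w = (a # u) @ g2 @ x" by auto
  then show ?thesis by blast
qed

lemma not_red: "\<not> red w \<Longrightarrow> \<exists>u x. w = u @ [True, True] @ x \<or> w = u @ [False, False, False] @ x"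
  apply (induction w rule: red.induct)
  apply (rule exI[of _ "[]"], simp)
  apply (rule exI[of _ "[]"], simp)
  apply simp
  apply (simp, rule cons_shift, simp)+
  done

lemma red_Cons: "red (a # w) \<Longrightarrow> red w"
  by (cases "(a # w)" rule: red.cases) auto

definition lead :: "bool list \<Rightarrow> nat" where "lead w = length (takeWhile Not w)"

fun invw :: "bool list \<Rightarrow> bool list" where
  "invw [] = []"
| "invw (a # w) = invw w @ (if a then [True] else [False, False])"


definition Lp :: "nat \<Rightarrow> real^2^2" where
  "Lp n = (if n = 0 then mat 1 else if n = 1 then Lmat else Lmat ** Lmat)"

definition nonneg :: "real^2^2 \<Rightarrow> bool" where
  "nonneg P \<longleftrightarrow> (\<forall>i j. 0 \<le> P$i$j)"

definition strict :: "real \<Rightarrow> real^2^2 \<Rightarrow> bool" where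
  "strict m P \<longleftrightarrow> m * P$2$2 \<le> P$1$2 \<or> m * P$1$1 \<le> P$2$1"

definition Xd :: "bool \<Rightarrow> real \<Rightarrow> real^2^2" where
  "Xd d a = (if d then Xmat a else mat 1)"

lemma nonneg_mat2: "nonneg (mat2 p q r t) \<longleftrightarrow> 0 \<le> p \<and> 0 \<le> q \<and> 0 \<le> r \<and> 0 \<le> t"
  by (auto simp: nonneg_def forall_2)

lemma close_arith:
  fixes p q r t s s' m c :: real
  assumes nn: "0 \<le> p" "0 \<le> q" "0 \<le> r" "0 \<le> t" and sp: "0 < s" "0 < s'"
    and m: "0 < m" "m \<le> 1" and c: "c = m / 2"
    and alt: "(p = 1 \<and> q = 0 \<and> r = 0 \<and> t = 1) \<or> m * t \<le> q \<or> m * p \<le> r"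
    and k: "k \<le> (2::nat)"
    and dist: "psl_dist (Lp k ** mat2 p q r t ** Xd d a) (mat 1) < c"
    and X: "Xmat a = mat2 0 (-s) s' 0"
  shows "k = 0 \<and> \<not> d \<and> p = 1 \<and> q = 0 \<and> r = 0 \<and> t = 1"
proof -
  obtain Q where Q: "Q = Lp k ** mat2 p q r t ** Xd d a" by blast
  obtain \<sigma> :: real where sg: "\<sigma> = 1 \<or> \<sigma> = -1" and nQ: "norm (Q - \<sigma> *\<^sub>R mat 1) < c"
  proof -
    have "norm (Q - mat 1) < c \<or> norm (Q + mat 1) < c"
      using dist Q by (auto simp: psl_dist_def)
    then show ?thesis
    proof
      assume "norm (Q - mat 1) < c" then show ?thesis using that[of 1] by simp
    next
      assume "norm (Q + mat 1) < c" then show ?thesis using that[of "-1"] by simp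
    qed
  qed
  have sI: "\<sigma> *\<^sub>R mat 1 = mat2 \<sigma> 0 0 \<sigma>"
    by (simp add: vec_eq_iff forall_2 mat_def mat2_def)
  have e: "\<bar>(Q - \<sigma> *\<^sub>R mat 1)$i$j\<bar> < c" for i j
    using entry_le_norm[of "Q - \<sigma> *\<^sub>R mat 1" i j] nQ by linarith
  define a11 where "a11 = Q$1$1"
  define a12 where "a12 = Q$1$2"
  define a21 where "a21 = Q$2$1"
  define a22 where "a22 = Q$2$2"
  have Qe: "Q = mat2 a11 a12 a21 a22" unfolding a11_def a12_def a21_def a22_def by (rule mat2_eta)
  have b: "\<bar>a11 - \<sigma>\<bar> < c" "\<bar>a12\<bar> < c" "\<bar>a21\<bar> < c" "\<bar>a22 - \<sigma>\<bar> < c"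
    using e[of 1 1] e[of 1 2] e[of 2 1] e[of 2 2] unfolding Qe sI mat2_minus by simp_all
  have pr: "0 \<le> p * s" "0 \<le> q * s" "0 \<le> r * s" "0 \<le> t * s" "0 \<le> p * s'" "0 \<le> q * s'" "0 \<le> r * s'" "0 \<le> t * s'"
    using nn sp by simp_all
  have c2: "c \<le> 1/2" "0 < c" using c m by simp_all
  have Lp1: "Lp 1 = mat2 0 1 (-1) (-1)" by (simp add: Lp_def Lmat_def)
  have Lp2: "Lp 2 = mat2 (-1) (-1) 1 0" by (simp add: Lp_def Lmat_def mat2_mult)
  have Lp0: "Lp 0 = mat2 1 0 0 1" by (simp add: Lp_def mat2_one)
  have ks: "k = 0 \<or> k = 1 \<or> k = 2" using k by auto
  show ?thesis
  proof (cases d)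
    case True
    then have "Q = Lp k ** mat2 p q r t ** mat2 0 (-s) s' 0" using Q X by (simp add: Xd_def)
    then show ?thesis using ks b sg pr c2 Qe
      by (auto simp: Lp_def Lmat_def mat2_one mat2_mult mat2_eq_iff algebra_simps abs_less_iff)
  next
    case False
    then have Q': "Q = Lp k ** mat2 p q r t" using Q by (simp add: Xd_def)
    show ?thesis
    proof (cases "k = 0")
      case True
      then have "a11 = p" "a12 = q" "a21 = r" "a22 = t" using Q' Qe by (simp_all add: Lp0 mat2_mult mat2_eq_iff)
      then have s1: "\<sigma> = 1" using b sg nn c2 by (auto simp: abs_less_iff)
      then have "1/2 \<le> t" "1/2 \<le> p" "q < c" "r < c" using b c2 \<open>a11 = p\<close> \<open>a12 = q\<close> \<open>a21 = r\<close> \<open>a22 = t\<close>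
        by (auto simp: abs_less_iff)
      moreover have "m * (1/2) \<le> m * t" "m * (1/2) \<le> m * p"
        using \<open>1/2 \<le> t\<close> \<open>1/2 \<le> p\<close> m by (simp_all add: mult_left_mono)
      ultimately show ?thesis using alt c True False by auto
    next
      case k0: False
      then show ?thesis using ks Q' Qe b sg nn c2
        by (auto simp: Lp_def Lmat_def mat2_mult mat2_eq_iff algebra_simps abs_less_iff)
    qed
  qed
qed

locale rg =
  fixes E :: "'e set" and r0 r1 :: "'e \<Rightarrow> 'e" and z :: "'e \<Rightarrow> real"
  assumes fin: "finite E" and p0: "r0 permutes E" and p1: "r1 permutes E"
    and o0: "\<forall>e\<in>E. r0 (r0 (r0 e)) = e" and o1: "\<forall>e\<in>E. r1 (r1 e) = e"
    and zs: "\<forall>g\<in>E. z (r1 g) = z g"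
begin

lemma act_in: "e \<in> E \<Longrightarrow> act r0 r1 w e \<in> E"
  by (induction w) (auto simp: permutes_in_image[OF p0] permutes_in_image[OF p1])

definition M :: real where "M = (\<Sum>e\<in>E. \<bar>z e\<bar>)"
definition m :: real where "m = exp (- M)"
definition c :: real where "c = m / 2"

lemma zb: "e \<in> E \<Longrightarrow> \<bar>z e\<bar> \<le> M"
  unfolding M_def by (rule member_le_sum) (auto simp: fin)

lemma M_nn: "0 \<le> M" unfolding M_def by (simp add: sum_nonneg)
lemma m_pos: "0 < m" "m \<le> 1" unfolding m_def using M_nn by auto
lemma c_pos: "0 < c" unfolding c_def using m_pos by simp

lemma TT: "y \<in> E \<Longrightarrow> act r0 r1 [True, True] y = y \<and> CHF r0 r1 z y [True, True] = - mat 1"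
  using o1 zs by (simp add: Xmat_sq)

lemma FFF: "act r0 r1 [False, False, False] y' = y' \<or> y' \<notin> E"
  using o0 by (cases "y' \<in> E") auto

lemma FFF2: "CHF r0 r1 z y [False, False, False] = mat 1"
  by (simp add: Lmat_cube matrix_mul_assoc)

lemma cancel:
  assumes e: "e \<in> E" and g: "g = [True, True] \<or> g = [False, False, False]"
  shows "act r0 r1 (u @ g @ x) e = act r0 r1 (u @ x) e \<and> psl_eq (CHF r0 r1 z e (u @ g @ x)) (CHF r0 r1 z e (u @ x))"
proof -
  define y where "y = act r0 r1 x e"
  have y: "y \<in> E" unfolding y_def using e by (rule act_in)
  have a: "act r0 r1 g y = y" and b: "psl_eq (CHF r0 r1 z y g) (mat 1)"
    using g TT[OF y] FFF[of y] FFF2[of y] y by (auto simp: psl_eq_def)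
  have "act r0 r1 (u @ g @ x) e = act r0 r1 (u @ x) e"
    by (simp add: act_append a flip: y_def)
  moreover have "psl_eq (CHF r0 r1 z e (u @ g @ x)) (CHF r0 r1 z e (u @ x))"
  proof -
    have "CHF r0 r1 z e (u @ g @ x) = CHF r0 r1 z (act r0 r1 (g @ x) e) u ** (CHF r0 r1 z y g ** CHF r0 r1 z e x)"
      by (simp add: CHF_append flip: y_def)
    also have "act r0 r1 (g @ x) e = y" by (simp add: act_append a flip: y_def)
    finally have 1: "CHF r0 r1 z e (u @ g @ x) = CHF r0 r1 z y u ** (CHF r0 r1 z y g ** CHF r0 r1 z e x)" .
    have 2: "CHF r0 r1 z e (u @ x) = CHF r0 r1 z y u ** (mat 1 ** CHF r0 r1 z e x)"
      by (simp add: CHF_append flip: y_def)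
    show ?thesis unfolding 1 2 by (intro psl_eq_mult b psl_eq_refl)
  qed
  ultimately show ?thesis by blast
qed

lemma reduce: "e \<in> E \<Longrightarrow> \<exists>w'. red w' \<and> psl_eq (CHF r0 r1 z e w) (CHF r0 r1 z e w')"
proof (induction "length w" arbitrary: w rule: less_induct)
  case less
  show ?case
  proof (cases "red w")
    case True then show ?thesis by (intro exI[of _ w]) simp
  next
    case False
    then obtain u x g where w: "w = u @ g @ x" and g: "g = [True, True] \<or> g = [False, False, False]"
      using not_red by blast
    have "length (u @ x) < length w" using w g by auto
    then obtain w' where "red w'" "psl_eq (CHF r0 r1 z e (u @ x)) (CHF r0 r1 z e w')"
      using less by blast
    then show ?thesis using cancel[OF less.prems g, of u x] w
      by (meson psl_eq_trans)
  qed
qed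

lemma inv: "e \<in> E \<Longrightarrow> act r0 r1 (invw w @ w) e = e \<and> psl_eq (CHF r0 r1 z e (invw w @ w)) (mat 1)"
proof (induction w)
  case Nil then show ?case by simp
next
  case (Cons a w)
  have g: "(if a then [True] else [False, False]) @ [a] = [True, True] \<or>
           (if a then [True] else [False, False]) @ [a] = [False, False, False]" by auto
  have eq: "invw (a # w) @ a # w = invw w @ ((if a then [True] else [False, False]) @ [a]) @ w" by simp
  show ?case unfolding eq using cancel[OF Cons.prems g, of "invw w" w] Cons
    by (metis psl_eq_trans)
qed


lemma lead_simps [simp]: "lead [] = 0" "lead (True # w) = 0" "lead (False # w) = Suc (lead w)"
  by (simp_all add: lead_def)

lemma B1_good:
  assumes a: "\<bar>a\<bar> \<le> M" and P: "nonneg P"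
  shows "nonneg (mat2 (exp (a/2)) (exp (a/2)) 0 (exp (-a/2)) ** P) \<and>
         strict m (mat2 (exp (a/2)) (exp (a/2)) 0 (exp (-a/2)) ** P)"
proof -
  define s where "s = exp (a/2)"
  define s' where "s' = exp (-a/2)"
  obtain p q r t where Pe: "P = mat2 p q r t" by (metis mat2_eta)
  have nn: "0 \<le> p" "0 \<le> q" "0 \<le> r" "0 \<le> t" using P Pe by (auto simp: nonneg_mat2)
  have sp: "0 < s" "0 < s'" unfolding s_def s'_def by auto
  have ms: "m * s' \<le> s" unfolding m_def s_def s'_def using a
    by (simp flip: exp_add)
  have "m * (s' * t) \<le> s * t" using ms nn(4) by (metis mult.assoc mult_right_mono)
  moreover have "0 \<le> s * q" using sp nn by simp
  ultimately have st: "m * (s' * t) \<le> s * q + s * t" by linarith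
  show ?thesis unfolding Pe s_def[symmetric] s'_def[symmetric]
    using nn sp st by (simp add: mat2_mult nonneg_mat2 strict_def)
qed

lemma B2_good:
  assumes a: "\<bar>a\<bar> \<le> M" and P: "nonneg P"
  shows "nonneg (mat2 (exp (a/2)) 0 (exp (-a/2)) (exp (-a/2)) ** P) \<and>
         strict m (mat2 (exp (a/2)) 0 (exp (-a/2)) (exp (-a/2)) ** P)"
proof -
  define s where "s = exp (a/2)"
  define s' where "s' = exp (-a/2)"
  obtain p q r t where Pe: "P = mat2 p q r t" by (metis mat2_eta)
  have nn: "0 \<le> p" "0 \<le> q" "0 \<le> r" "0 \<le> t" using P Pe by (auto simp: nonneg_mat2)
  have sp: "0 < s" "0 < s'" unfolding s_def s'_def by auto
  have ms: "m * s \<le> s'" unfolding m_def s_def s'_def using a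
    by (simp flip: exp_add)
  have "m * (s * p) \<le> s' * p" using ms nn(1) by (metis mult.assoc mult_right_mono)
  moreover have "0 \<le> s' * r" using sp nn by simp
  ultimately have st: "m * (s * p) \<le> s' * p + s' * r" by linarith
  show ?thesis unfolding Pe s_def[symmetric] s'_def[symmetric]
    using nn sp st by (simp add: mat2_mult nonneg_mat2 strict_def)
qed

lemma XL1: "Xmat a ** Lp (Suc 0) = mat2 (exp (a/2)) (exp (a/2)) 0 (exp (-a/2))"
  by (simp add: Xmat_def Lp_def Lmat_def mat2_mult)

lemma XL2: "Xmat a ** Lp 2 = - mat2 (exp (a/2)) 0 (exp (-a/2)) (exp (-a/2))"
  by (simp add: Xmat_def Lp_def Lmat_def mat2_mult mat2_neg)

lemma lead_Cons: "lead (x # w) = (if x then 0 else Suc (lead w))"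
  by (simp add: lead_def)

lemma lead_ge2: "2 \<le> lead w \<Longrightarrow> \<exists>v. w = False # False # v"
  by (cases w; cases "tl w") (auto simp: lead_Cons split: if_splits)

lemma nonneg_one: "nonneg (mat 1)" by (simp add: mat2_one nonneg_mat2)

lemma nf: "red w \<Longrightarrow> e \<in> E \<Longrightarrow> lead w \<le> 2 \<and> (\<exists>P d. nonneg P \<and> (P = mat 1 \<or> strict m P) \<and>
    psl_eq (Lp (lead w) ** P ** Xd d (z e)) (CHF r0 r1 z e w))"
proof (induction w)
  case Nil
  show ?case
    by (intro conjI exI[of _ "mat 1"] exI[of _ False]) (auto simp: nonneg_one Lp_def Xd_def)
next
  case (Cons a w)
  have rw: "red w" using Cons.prems(1) by (rule red_Cons)
  from Cons.IH[OF rw Cons.prems(2)] obtain P d where lw: "lead w \<le> 2" and P: "nonneg P" "P = mat 1 \<or> strict m P"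
    and eq: "psl_eq (Lp (lead w) ** P ** Xd d (z e)) (CHF r0 r1 z e w)" by blast
  have wc: "w = [] \<or> (\<exists>v. w = True # v) \<or> (\<exists>v. w = False # v)"
    by (cases w) auto
  show ?case
  proof (cases a)
    case False
    have l1: "lead w \<le> 1"
    proof (rule ccontr)
      assume "\<not> lead w \<le> 1"
      then obtain v where "w = False # False # v" using lead_ge2 by fastforce
      then show False using Cons.prems(1) False by simp
    qed
    have LL: "Lmat ** Lp (lead w) = Lp (Suc (lead w))"
      using l1 by (auto simp: Lp_def le_Suc_eq)
    have "psl_eq (Lmat ** (Lp (lead w) ** P ** Xd d (z e))) (Lmat ** CHF r0 r1 z e w)"
      by (rule psl_eq_mult[OF psl_eq_refl eq])
    then have "psl_eq (Lp (Suc (lead w)) ** P ** Xd d (z e)) (CHF r0 r1 z e (a # w))"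
      using False by (simp add: matrix_mul_assoc LL)
    then show ?thesis using False l1 P by auto
  next
    case True
    show ?thesis
    proof (cases "w = []")
      case wn: True
      show ?thesis using True wn
        by (intro conjI exI[of _ "mat 1"] exI[of _ True]) (auto simp: nonneg_one Lp_def Xd_def)
    next
      case wn: False
      then obtain v where wv: "w = False # v" using wc Cons.prems(1) True by auto
      define b where "b = z (act r0 r1 w e)"
      have bM: "\<bar>b\<bar> \<le> M" unfolding b_def by (rule zb, rule act_in, rule Cons.prems(2))
      have lk: "lead w = 1 \<or> lead w = 2" using lw wv by auto
      obtain B where B: "psl_eq (Xmat b ** Lp (lead w)) B" "nonneg (B ** P)" "strict m (B ** P)"
      proof (cases "lead w = 1")
        case True
        then show ?thesis using that[of "mat2 (exp (b/2)) (exp (b/2)) 0 (exp (-b/2))"] B1_good[OF bM P(1)]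
          by (simp add: XL1)
      next
        case False
        then have "lead w = 2" using lk by simp
        then show ?thesis using that[of "mat2 (exp (b/2)) 0 (exp (-b/2)) (exp (-b/2))"] B2_good[OF bM P(1)]
          by (simp add: XL2 psl_eq_def)
      qed
      have "psl_eq (Xmat b ** (Lp (lead w) ** P ** Xd d (z e))) (Xmat b ** CHF r0 r1 z e w)"
        by (rule psl_eq_mult[OF psl_eq_refl eq])
      moreover have "psl_eq (B ** P ** Xd d (z e)) (Xmat b ** (Lp (lead w) ** P ** Xd d (z e)))"
        using psl_eq_mult[OF psl_eq_mult[OF psl_eq_sym[OF B(1)] psl_eq_refl[of P]] psl_eq_refl[of "Xd d (z e)"]]
        by (simp add: matrix_mul_assoc)
      ultimately have h: "psl_eq (B ** P ** Xd d (z e)) (Xmat b ** CHF r0 r1 z e w)"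
        by (rule psl_eq_trans[rotated])
      have c1: "CHF r0 r1 z e (a # w) = Xmat b ** CHF r0 r1 z e w"
        using True by (simp add: b_def)
      have c2: "Lp (lead (a # w)) ** (B ** P) ** Xd d (z e) = B ** P ** Xd d (z e)"
        using True by (simp add: Lp_def)
      have "psl_eq (Lp (lead (a # w)) ** (B ** P) ** Xd d (z e)) (CHF r0 r1 z e (a # w))"
        unfolding c1 c2 by (rule h)
      moreover have "lead (a # w) \<le> 2" using True by simp
      ultimately show ?thesis using B(2,3) by blast
    qed
  qed
qed


lemma key:
  assumes e: "e \<in> E" and d: "psl_dist (CHF r0 r1 z e w) (mat 1) < c"
  shows "psl_eq (CHF r0 r1 z e w) (mat 1)"
proof -
  obtain w' where rw: "red w'" and eq1: "psl_eq (CHF r0 r1 z e w) (CHF r0 r1 z e w')"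
    using reduce[OF e] by blast
  obtain P dd where lw: "lead w' \<le> 2" and P: "nonneg P" "P = mat 1 \<or> strict m P"
    and eq2: "psl_eq (Lp (lead w') ** P ** Xd dd (z e)) (CHF r0 r1 z e w')"
    using nf[OF rw e] by blast
  define Q where "Q = Lp (lead w') ** P ** Xd dd (z e)"
  have eqQ: "psl_eq Q (CHF r0 r1 z e w)"
    unfolding Q_def using eq2 eq1 by (meson psl_eq_sym psl_eq_trans)
  have dQ: "psl_dist Q (mat 1) < c"
    using d psl_dist_eq[OF eqQ psl_eq_refl[of "mat 1"]] by simp
  obtain p q r t where Pe: "P = mat2 p q r t" by (metis mat2_eta)
  have nn: "0 \<le> p" "0 \<le> q" "0 \<le> r" "0 \<le> t" using P(1) Pe by (auto simp: nonneg_mat2)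
  have alt: "(p = 1 \<and> q = 0 \<and> r = 0 \<and> t = 1) \<or> m * t \<le> q \<or> m * p \<le> r"
    using P(2) Pe by (auto simp: mat2_one mat2_eq_iff strict_def)
  have X: "Xmat (z e) = mat2 0 (- exp (z e / 2)) (exp (- z e / 2)) 0" by (simp add: Xmat_def)
  have res: "lead w' = 0 \<and> \<not> dd \<and> p = 1 \<and> q = 0 \<and> r = 0 \<and> t = 1"
    by (rule close_arith[OF nn _ _ m_pos c_def alt lw _ X]) (use dQ Q_def Pe in auto)
  then have "Q = mat 1" unfolding Q_def Pe by (simp add: Lp_def Xd_def mat2_one[symmetric])
  then show ?thesis using eqQ psl_eq_sym by metis
qed

end

lemma inv_mat1: "(N::real^2^2) ** A = mat 1 \<Longrightarrow> matrix_inv A = N"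
proof -
  assume NA: "N ** A = mat 1"
  then have AN: "A ** N = mat 1" using matrix_left_right_inverse by blast
  have "\<exists>A'. A ** A' = mat 1 \<and> A' ** A = mat 1" using NA AN by blast
  then have Y: "A ** matrix_inv A = mat 1 \<and> matrix_inv A ** A = mat 1"
    unfolding matrix_inv_def by (rule someI_ex)
  have "matrix_inv A = matrix_inv A ** (A ** N)" by (simp add: AN)
  also have "\<dots> = N" using Y by (simp add: matrix_mul_assoc)
  finally show ?thesis .
qed

lemma inv_mat: "psl_eq ((N::real^2^2) ** A) (mat 1) \<Longrightarrow> psl_eq N (matrix_inv A)"
proof -
  assume "psl_eq (N ** A) (mat 1)"
  then have "N ** A = mat 1 \<or> (- N) ** A = mat 1"
    unfolding psl_eq_def by (auto simp: mult_neg_l)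
  then show ?thesis
  proof
    assume "N ** A = mat 1" then show ?thesis using inv_mat1 by simp
  next
    assume "(- N) ** A = mat 1" then have "matrix_inv A = - N" by (rule inv_mat1)
    then show ?thesis by (simp add: psl_eq_def)
  qed
qed

lemma comm_inv: "psl_eq ((N::real^2^2) ** A) (mat 1) \<Longrightarrow> psl_eq (A ** N) (mat 1)"
proof -
  assume "psl_eq (N ** A) (mat 1)"
  then have "N ** A = mat 1 \<or> (- N) ** A = mat 1"
    unfolding psl_eq_def by (auto simp: mult_neg_l)
  then have "A ** N = mat 1 \<or> A ** (- N) = mat 1" using matrix_left_right_inverse by blast
  then show ?thesis by (auto simp: psl_eq_def mult_neg_r)
qed



theorem mainTheorem2:
  fixes E :: "'e set" and r0 r1 :: "'e \<Rightarrow> 'e" and z :: "'e \<Rightarrow> real" and \<epsilon> :: 'e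
  assumes "trivalent_ribbon_graph E r0 r1"
    and "connected_rg E r0 r1"
    and "\<forall>g\<in>E. z (r1 g) = z g"
    and "\<epsilon> \<in> E"
  shows "fuchsian (Delta r0 r1 z \<epsilon>)"
proof -
  interpret rg E r0 r1 z
    using assms(1,3) unfolding trivalent_ribbon_graph_def by unfold_locales auto
  have eps: "\<epsilon> \<in> E" by fact
  define D where "D = Delta r0 r1 z \<epsilon>"
  have mem: "A \<in> D \<longleftrightarrow> (\<exists>w. act r0 r1 w \<epsilon> = \<epsilon> \<and> psl_eq (CHF r0 r1 z \<epsilon> w) A)" for A
    unfolding D_def Delta_def by simp
  have memI: "CHF r0 r1 z \<epsilon> w \<in> D" if "act r0 r1 w \<epsilon> = \<epsilon>" for w
    using that unfolding D_def Delta_def by (auto intro: psl_eq_refl)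
  have CHFc: "CHF r0 r1 z \<epsilon> (w1 @ w2) = CHF r0 r1 z \<epsilon> w1 ** CHF r0 r1 z \<epsilon> w2"
    if "act r0 r1 w2 \<epsilon> = \<epsilon>" for w1 w2
    using that by (simp add: CHF_append)
  have actc: "act r0 r1 (w1 @ w2) \<epsilon> = \<epsilon>"
    if "act r0 r1 w1 \<epsilon> = \<epsilon>" "act r0 r1 w2 \<epsilon> = \<epsilon>" for w1 w2
    using that by (simp add: act_append)
  have invD: "act r0 r1 (invw w) \<epsilon> = \<epsilon> \<and> psl_eq (CHF r0 r1 z \<epsilon> (invw w) ** CHF r0 r1 z \<epsilon> w) (mat 1)"
    if "act r0 r1 w \<epsilon> = \<epsilon>" for w
    using inv[OF eps, of w] that by (simp add: act_append CHF_append)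
  have sub: "psl_subgroup D"
    unfolding psl_subgroup_def
  proof (intro conjI ballI)
    fix A assume "A \<in> D"
    then obtain w where "psl_eq (CHF r0 r1 z \<epsilon> w) A" using mem by blast
    then show "det A = 1" using det_CHF[of r0 r1 z \<epsilon> w]
      by (auto simp: psl_eq_def det_neg2)
  next
    have "act r0 r1 [] \<epsilon> = \<epsilon> \<and> psl_eq (CHF r0 r1 z \<epsilon> []) (mat 1)" by simp
    then have "mat 1 \<in> D" using memI[of "[]"] by simp
    then show "\<exists>A\<in>D. psl_eq A (mat 1)" using psl_eq_refl by blast
  next
    fix A B assume "A \<in> D" "B \<in> D"
    then obtain w1 w2 where w: "act r0 r1 w1 \<epsilon> = \<epsilon>" "psl_eq (CHF r0 r1 z \<epsilon> w1) A"
      "act r0 r1 w2 \<epsilon> = \<epsilon>" "psl_eq (CHF r0 r1 z \<epsilon> w2) B" using mem by blast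
    have "CHF r0 r1 z \<epsilon> (w1 @ w2) \<in> D"
      using actc[OF w(1,3)] by (rule memI)
    moreover have "psl_eq (CHF r0 r1 z \<epsilon> (w1 @ w2)) (A ** B)"
      unfolding CHFc[OF w(3)] by (rule psl_eq_mult[OF w(2,4)])
    ultimately show "\<exists>C\<in>D. psl_eq C (A ** B)" by blast
  next
    fix A assume "A \<in> D"
    then obtain w where w: "act r0 r1 w \<epsilon> = \<epsilon>" "psl_eq (CHF r0 r1 z \<epsilon> w) A" using mem by blast
    have N: "act r0 r1 (invw w) \<epsilon> = \<epsilon>" "psl_eq (CHF r0 r1 z \<epsilon> (invw w) ** CHF r0 r1 z \<epsilon> w) (mat 1)"
      using invD[OF w(1)] by auto
    have "psl_eq (CHF r0 r1 z \<epsilon> (invw w) ** A) (mat 1)"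
      using psl_eq_trans[OF psl_eq_sym[OF psl_eq_mult[OF psl_eq_refl w(2)]] N(2)] .
    then have "psl_eq (CHF r0 r1 z \<epsilon> (invw w)) (matrix_inv A)" by (rule inv_mat)
    moreover have "CHF r0 r1 z \<epsilon> (invw w) \<in> D" using N(1) by (rule memI)
    ultimately show "\<exists>C\<in>D. psl_eq C (matrix_inv A)" by blast
  qed
  have disc: "psl_discrete D"
    unfolding psl_discrete_def
  proof
    fix A assume "A \<in> D"
    then obtain w1 where w1: "act r0 r1 w1 \<epsilon> = \<epsilon>" "psl_eq (CHF r0 r1 z \<epsilon> w1) A" using mem by blast
    define C where "C = CHF r0 r1 z \<epsilon> w1"
    define N where "N = CHF r0 r1 z \<epsilon> (invw w1)"
    have NC: "psl_eq (N ** C) (mat 1)" using invD[OF w1(1)] unfolding N_def C_def by auto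
    have Kp: "0 \<le> Kn N" unfolding Kn_def by simp
    define e where "e = c / (Kn N + 1)"
    have ep: "0 < e" unfolding e_def using c_pos Kp by simp
    have Ke: "Kn N * e < c"
    proof -
      have "Kn N * e = c * (Kn N / (Kn N + 1))" unfolding e_def by (simp add: field_simps)
      also have "\<dots> < c * 1" using c_pos Kp by (intro mult_strict_left_mono) auto
      finally show ?thesis by simp
    qed
    show "\<exists>e>0. \<forall>B\<in>D. psl_dist A B < e \<longrightarrow> psl_eq A B"
    proof (intro exI[of _ e] conjI ballI impI ep)
      fix B assume "B \<in> D" and dAB: "psl_dist A B < e"
      then obtain w2 where w2: "act r0 r1 w2 \<epsilon> = \<epsilon>" "psl_eq (CHF r0 r1 z \<epsilon> w2) B" using mem by blast
      define C2 where "C2 = CHF r0 r1 z \<epsilon> w2"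
      have dCC: "psl_dist C C2 < e"
        using dAB psl_dist_eq[OF w1(2) w2(2)] unfolding C_def C2_def by simp
      obtain T where T: "psl_eq C T" and nT: "norm (C2 - T) < e"
      proof (cases "norm (C - C2) \<le> norm (C + C2)")
        case True
        then have "norm (C2 - C) < e" using dCC by (simp add: psl_dist_def norm_minus_commute)
        then show ?thesis using that[of C] by simp
      next
        case False
        then have "norm (C + C2) < e" using dCC by (simp add: psl_dist_def)
        then have "norm (C2 - (- C)) < e" by (simp add: add.commute)
        then show ?thesis using that[of "- C"] by (simp add: psl_eq_def)
      qed
      have NT: "psl_eq (N ** T) (mat 1)"
        using psl_eq_trans[OF psl_eq_sym[OF psl_eq_mult[OF psl_eq_refl[of N] T]] NC] .
      have nd: "norm (N ** C2 - N ** T) < c"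
      proof -
        have "norm (N ** C2 - N ** T) = norm (N ** (C2 - T))" by (simp add: mult_minus_r)
        also have "\<dots> \<le> Kn N * norm (C2 - T)" by (rule norm_mult_le)
        also have "\<dots> \<le> Kn N * e" using nT Kp by (intro mult_left_mono) auto
        finally show ?thesis using Ke by simp
      qed
      have "psl_dist (N ** C2) (mat 1) < c"
      proof -
        have "N ** T = mat 1 \<or> N ** T = - mat 1" using NT unfolding psl_eq_def by auto
        then show ?thesis
        proof
          assume "N ** T = mat 1" then show ?thesis using nd by (simp add: psl_dist_def)
        next
          assume "N ** T = - mat 1" then show ?thesis using nd by (simp add: psl_dist_def)
        qed
      qed
      moreover have "N ** C2 = CHF r0 r1 z \<epsilon> (invw w1 @ w2)"
        unfolding N_def C2_def by (rule CHFc[OF w2(1), symmetric])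
      ultimately have NC2: "psl_eq (N ** C2) (mat 1)" using key[OF eps] by simp
      have CN: "psl_eq (C ** N) (mat 1)" by (rule comm_inv[OF NC])
      have "psl_eq ((C ** N) ** C2) (mat 1 ** C2)" by (rule psl_eq_mult[OF CN psl_eq_refl])
      moreover have "psl_eq (C ** (N ** C2)) (C ** mat 1)" by (rule psl_eq_mult[OF psl_eq_refl NC2])
      ultimately have "psl_eq C2 C" by (simp add: matrix_mul_assoc) (rule psl_eq_trans[OF psl_eq_sym])
      then have "psl_eq C C2" by (rule psl_eq_sym)
      then show "psl_eq A B" using psl_eq_trans[OF psl_eq_trans[OF psl_eq_sym[OF w1(2)]] w2(2)]
        unfolding C_def C2_def by blast
    qed
  qed
  show ?thesis using sub disc unfolding fuchsian_def D_def by blast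
qed

end
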